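(* (i) For $0\le\alpha<1$, the $\mathcal{S}^*_{car}$-radius of the class $\mathcal{BL}(\alpha)$ is $1/(1+\sqrt{1+\alpha})$. (ii) For $\beta>1$, the $\mathcal{S}^*_{car}$-radius of the class $\mathcal{M}(\beta)$ is $1/(4\beta-3)$.
   Context: $\mathbb{D}=\{z:|z|<1\}$; $\mathcal{A}$ is the class of analytic $f$ on $\mathbb{D}$ with $f(0)=0$, $f'(0)=1$. $F\prec G$ means $F=G\circ w$ for an analytic $w:\mathbb{D}\to\mathbb{D}$ with $w(0)=0$. $\mathcal{S}^*_{car}$ is the class of $f\in\mathcal{A}$ with $zf'(z)/f(z)\prec 1+z+z^2/2$. $\mathcal{BL}(\alpha)$ is the class of $f\in\mathcal{A}$ with $zf'(z)/f(z)\prec 1+z/(1-\alpha z^2)$; $\mathcal{M}(\beta)$ is the class of $f\in\mathcal{A}$ with $\operatorname{Re}(zf'(z)/f(z))<\beta$ on $\mathbb{D}$. For a class $\mathcal{F}\subseteq\mathcal{A}$, the $\mathcal{S}^*_{car}$-radius of $\mathcal{F}$ is the supremum of all $r\in(0,1]$ such that $f(rz)/r\in\mathcal{S}^*_{car}$ for every $f\in\mathcal{F}$. *)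

theory Defs
  imports "HOL-Analysis.Analysis"
begin

definition unit_disc :: "complex set" where
  "unit_disc = ball 0 1"

definition subordinate :: "(complex \<Rightarrow> complex) \<Rightarrow> (complex \<Rightarrow> complex) \<Rightarrow> bool" where
  "subordinate F G \<longleftrightarrow> (\<exists>w. w holomorphic_on unit_disc \<and> w ` unit_disc \<subseteq> unit_disc \<and> w 0 = 0
       \<and> (\<forall>z\<in>unit_disc. F z = G (w z)))"

definition class_A :: "(complex \<Rightarrow> complex) set" where
  "class_A = {f. f holomorphic_on unit_disc \<and> f 0 = 0 \<and> deriv f 0 = 1}"

text \<open>The function z f'(z)/f(z), with its removable value 1 at z = 0 (for f in class A).\<close>
definition zf_over_f :: "(complex \<Rightarrow> complex) \<Rightarrow> complex \<Rightarrow> complex" where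
  "zf_over_f f z = (if z = 0 then 1 else z * deriv f z / f z)"

definition S_car :: "(complex \<Rightarrow> complex) set" where
  "S_car = {f \<in> class_A. zf_over_f f holomorphic_on unit_disc \<and>
      subordinate (zf_over_f f) (\<lambda>z. 1 + z + z\<^sup>2 / 2)}"

definition BL :: "real \<Rightarrow> (complex \<Rightarrow> complex) set" where
  "BL \<alpha> = {f \<in> class_A. zf_over_f f holomorphic_on unit_disc \<and>
      subordinate (zf_over_f f) (\<lambda>z. 1 + z / (1 - complex_of_real \<alpha> * z\<^sup>2))}"

text \<open>Class M(beta): Re(z f'/f) < beta on D (z f'/f being analytic, i.e. f nonvanishing on D minus 0).\<close>
definition M_class :: "real \<Rightarrow> (complex \<Rightarrow> complex) set" where
  "M_class \<beta> = {f \<in> class_A. (\<forall>z\<in>unit_disc. z \<noteq> 0 \<longrightarrow> f z \<noteq> 0) \<and>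
      (\<forall>z\<in>unit_disc. Re (zf_over_f f z) < \<beta>)}"

definition Scar_radius :: "(complex \<Rightarrow> complex) set \<Rightarrow> real" where
  "Scar_radius F = Sup {r. 0 < r \<and> r \<le> 1 \<and>
      (\<forall>f\<in>F. (\<lambda>z. f (complex_of_real r * z) / complex_of_real r) \<in> S_car)}"

end

theory Submission
  imports Defs "HOL-Complex_Analysis.Complex_Analysis"
begin

lemma BL_poly:
  fixes a x y p :: real
  assumes "x^2 + y^2 = p^2" "0 \<le> p" "p < 1/2" "0 \<le> a" "a < 1" "1 - 2*p - a*p^2 > 0"
  shows "4*((1-a*(x^2-y^2))^2+(2*a*x*y)^2)-((a*(x^2-y^2)+2*x-1)^2+(2*a*x*y+2*y)^2) > 0"
proof -
  have E0: "4*((1-a*(x^2-y^2))^2+(2*a*x*y)^2)-((a*(x^2-y^2)+2*x-1)^2+(2*a*x*y+2*y)^2)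
      = 3*(1+2*a*(x^2+y^2)-4*a*x^2+a^2*(x^2+y^2)^2)-4*(x^2+y^2)-4*(a*(x^2+y^2)-1)*x"
    by (simp add: power2_eq_square algebra_simps)
  have p4: "p^4 = (p^2)^2" by simp
  define E where "E = 3*(1+2*a*p^2-4*a*x^2+a^2*p^4)-4*p^2-4*(a*p^2-1)*x"
  have E: "4*((1-a*(x^2-y^2))^2+(2*a*x*y)^2)-((a*(x^2-y^2)+2*x-1)^2+(2*a*x*y+2*y)^2) = E"
    unfolding E0 E_def p4 assms(1) ..
  have xb: "x^2 \<le> p^2" using assms(1) by (smt (verit) zero_le_power2)
  hence xa: "\<bar>x\<bar> \<le> p" using assms(2) by (metis abs_le_square_iff abs_of_nonneg)
  define Dp where "Dp = -(3*a*p^2+2*p-3)*(1+2*p-a*p^2)"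
  define Dm where "Dm = -(3*a*p^2-2*p-3)*(1-2*p-a*p^2)"
  have key: "2*p*E = ((p+x)*Dp+(p-x)*Dm) + 24*a*p*(p^2-x^2)"
    unfolding E_def Dp_def Dm_def by (simp add: power2_eq_square power4_eq_xxxx algebra_simps)
  have p2: "p^2 < 1" using power_strict_mono[of p 1 2] assms by simp
  have "a*p^2 \<le> 1*p^2" using assms by (intro mult_right_mono) auto
  hence ap: "a*p^2 < 1" using p2 by simp
  have A1: "3*a*p^2+2*p-3 < 0" using ap assms by linarith
  have B1: "1+2*p-a*p^2 > 0" using ap assms by linarith
  have A2: "3*a*p^2-2*p-3 < 0" using ap assms by linarith
  have Dp: "Dp > 0" unfolding Dp_def by (rule mult_pos_pos) (use A1 B1 in linarith)+
  have Dm: "Dm > 0" unfolding Dm_def by (rule mult_pos_pos) (use A2 assms(6) in linarith)+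
  show ?thesis
  proof (cases "p = 0")
    case True
    then have "x = 0" using xa by simp
    then show ?thesis using E True unfolding E_def by simp
  next
    case False
    then have pp: "p > 0" using assms by simp
    have "(p+x)*Dp+(p-x)*Dm > 0"
    proof (cases "x \<ge> 0")
      case True
      then have "(p+x)*Dp > 0" using pp Dp by simp
      moreover have "(p-x)*Dm \<ge> 0" using xa Dm by simp
      ultimately show ?thesis by simp
    next
      case False
      then have "(p-x)*Dm > 0" using pp Dm by simp
      moreover have "(p+x)*Dp \<ge> 0" using xa Dp by simp
      ultimately show ?thesis by simp
    qed
    moreover have "24*a*p*(p^2-x^2) \<ge> 0" using assms xb by simp
    ultimately have "2*p*E > 0" using key by linarith
    then show ?thesis using E pp by (simp add: zero_less_mult_iff)
  qed
qed
lemma R_BL: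
  fixes a :: real assumes "0 \<le> a" "a < 1"
  defines "R \<equiv> 1/(1+sqrt(1+a))"
  shows "0 < R" "R \<le> 1/2" "a*R^2 + 2*R - 1 = 0"
proof -
  define s where "s = sqrt(1+a)"
  have s1: "s \<ge> 1" unfolding s_def using assms by simp
  have ss: "s^2 = 1 + a" unfolding s_def using assms by simp
  have Rd: "R = 1/(1+s)" unfolding R_def s_def ..
  show "0 < R" using s1 Rd by simp
  show "R \<le> 1/2" using s1 Rd by (simp add: divide_le_eq)
  have sp: "1 + s \<noteq> 0" using s1 by simp
  have Rs: "R*(1+s) = 1" using sp unfolding Rd by (simp add: field_simps)
  have "(s^2-1)*R^2 + 2*R - 1 = (s-1)*R*(R*(1+s)) + 2*R - 1" by (simp add: power2_eq_square algebra_simps)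
  also have "\<dots> = (s-1)*R + 2*R - 1" by (simp add: Rs)
  also have "\<dots> = R*(1+s) - 1" by (simp add: algebra_simps)
  finally have "(s^2-1)*R^2 + 2*R - 1 = 0" using Rs by simp
  moreover have "a = s^2 - 1" using ss by simp
  ultimately show "a*R^2 + 2*R - 1 = 0" by simp
qed

lemma BL_disc:
  fixes a :: real and z :: complex
  assumes "0 \<le> a" "a < 1" "cmod z < 1/(1+sqrt(1+a))"
  shows "1 - of_real a * z^2 \<noteq> 0" "cmod (1 + z/(1 - of_real a * z^2) - 3/2) < 1"
proof -
  define R where "R = 1/(1+sqrt(1+a))"
  note RR = R_BL[OF assms(1,2), folded R_def]
  define p where "p = cmod z"
  have p0: "0 \<le> p" unfolding p_def by simp
  have pR: "p < R" using assms(3) unfolding p_def R_def .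
  have "a*p^2 \<le> a*R^2" using assms p0 pR by (intro mult_left_mono power_mono) auto
  hence pc: "1 - 2*p - a*p^2 > 0" using RR pR by linarith
  define x where "x = Re z"
  define y where "y = Im z"
  have xy: "x^2 + y^2 = p^2" unfolding x_def y_def p_def using cmod_power2[of z] by simp
  have D: "4*((1-a*(x^2-y^2))^2+(2*a*x*y)^2)-((a*(x^2-y^2)+2*x-1)^2+(2*a*x*y+2*y)^2) > 0"
    using BL_poly[OF xy p0 _ assms(1,2) pc] pR RR by linarith
  define N1 where "N1 = 1 - of_real a * z^2"
  define N2 where "N2 = of_real a * z^2 + 2*z - 1"
  have n1: "cmod N1 ^2 = (1-a*(x^2-y^2))^2+(2*a*x*y)^2"
    unfolding cmod_power2 N1_def x_def y_def by (simp add: power2_eq_square algebra_simps)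
  have n2: "cmod N2 ^2 = (a*(x^2-y^2)+2*x-1)^2+(2*a*x*y+2*y)^2"
    unfolding cmod_power2 N2_def x_def y_def by (simp add: power2_eq_square algebra_simps)
  have lt: "cmod N2 ^2 < (2 * cmod N1)^2" using D n1 n2 by (simp add: power_mult_distrib)
  hence lt2: "cmod N2 < 2 * cmod N1" by (rule power_less_imp_less_base) simp
  hence "N1 \<noteq> 0" by auto
  then show "1 - of_real a * z^2 \<noteq> 0" unfolding N1_def .
  have "1 + z/(1 - of_real a * z^2) - 3/2 = N2 / (2*N1)"
    using \<open>N1 \<noteq> 0\<close> unfolding N1_def N2_def by (simp add: field_simps)
  also have "cmod \<dots> < 1" using lt2 \<open>N1 \<noteq> 0\<close> by (simp add: norm_divide divide_less_eq)
  finally show "cmod (1 + z/(1 - of_real a * z^2) - 3/2) < 1" .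
qed
lemma M_poly:
  fixes b x y p :: real
  assumes "x^2 + y^2 = p^2" "0 \<le> p" "b > 1" "(4*b-3)*p < 1"
  shows "4*((1-x)^2+y^2) - (((5-4*b)*x-1)^2 + ((5-4*b)*y)^2) > 0"
proof -
  have E0: "4*((1-x)^2+y^2) - (((5-4*b)*x-1)^2 + ((5-4*b)*y)^2)
     = 3 + 4*(x^2+y^2) - (5-4*b)^2*(x^2+y^2) + (2*(5-4*b)-8)*x"
    by (simp add: power2_eq_square algebra_simps)
  define E where "E = 3 + 4*p^2 - (5-4*b)^2*p^2 + (2*(5-4*b)-8)*x"
  have E: "4*((1-x)^2+y^2) - (((5-4*b)*x-1)^2 + ((5-4*b)*y)^2) = E"
    unfolding E0 E_def assms(1) ..
  have xb: "x^2 \<le> p^2" using assms(1) by (smt (verit) zero_le_power2)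
  hence xa: "\<bar>x\<bar> \<le> p" using assms(2) by (metis abs_le_square_iff abs_of_nonneg)
  define Dp where "Dp = (3-(7-4*b)*p)*(1+(3-4*b)*p)"
  define Dm where "Dm = (1+(4*b-3)*p)*(3+(7-4*b)*p)"
  have key: "2*p*E = (p+x)*Dp+(p-x)*Dm"
    unfolding E_def Dp_def Dm_def by (simp add: power2_eq_square algebra_simps)
  have p1: "p < 1" using assms by (smt (verit) mult_le_cancel_right1)
  have A1: "3-(7-4*b)*p > 0"
  proof (cases "7 - 4*b \<le> 0")
    case True then show ?thesis using assms(2) by (smt (verit) mult_nonpos_nonneg)
  next
    case False
    then have "(7-4*b)*p \<le> (7-4*b)" using mult_left_mono[of p 1 "7-4*b"] p1 by simp
    then show ?thesis using assms by linarith
  qed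
  have m: "(3-4*b)*p = -((4*b-3)*p)" by (simp add: algebra_simps)
  have Dp: "Dp > 0" unfolding Dp_def by (rule mult_pos_pos) (use A1 assms m in linarith)+
  have q: "(4*b-3)*p \<ge> 0" using assms by simp
  have m2: "(7-4*b)*p = 4*p - (4*b-3)*p" by (simp add: algebra_simps)
  have Dm: "Dm > 0" unfolding Dm_def by (rule mult_pos_pos) (use assms q m2 in linarith)+
  show ?thesis
  proof (cases "p = 0")
    case True
    then have "x = 0" using xa by simp
    then show ?thesis using E True unfolding E_def by simp
  next
    case False
    then have pp: "p > 0" using assms by simp
    have "(p+x)*Dp+(p-x)*Dm > 0"
    proof (cases "x \<ge> 0")
      case True
      then have "(p+x)*Dp > 0" using pp Dp by simp
      moreover have "(p-x)*Dm \<ge> 0" using xa Dm by simp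
      ultimately show ?thesis by simp
    next
      case False
      then have "(p-x)*Dm > 0" using pp Dm by simp
      moreover have "(p+x)*Dp \<ge> 0" using xa Dp by simp
      ultimately show ?thesis by simp
    qed
    then have "2*p*E > 0" using key by linarith
    then show ?thesis using E pp by (simp add: zero_less_mult_iff)
  qed
qed

lemma M_disc:
  fixes b :: real and z :: complex
  assumes "b > 1" "cmod z < 1/(4*b-3)"
  shows "1 - z \<noteq> 0" "cmod ((1 - of_real (2*b-1) * z)/(1 - z) - 3/2) < 1"
proof -
  define p where "p = cmod z"
  have p0: "0 \<le> p" unfolding p_def by simp
  have pR: "(4*b-3)*p < 1" using assms unfolding p_def by (simp add: field_simps)
  define x where "x = Re z"
  define y where "y = Im z"
  have xy: "x^2 + y^2 = p^2" unfolding x_def y_def p_def using cmod_power2[of z] by simp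
  have D: "4*((1-x)^2+y^2) - (((5-4*b)*x-1)^2 + ((5-4*b)*y)^2) > 0"
    using M_poly[OF xy p0 assms(1) pR] .
  define N1 where "N1 = 1 - z"
  define N2 where "N2 = of_real (5-4*b) * z - 1"
  have n1: "cmod N1 ^2 = (1-x)^2+y^2"
    unfolding cmod_power2 N1_def x_def y_def by (simp add: power2_eq_square algebra_simps)
  have n2: "cmod N2 ^2 = ((5-4*b)*x-1)^2 + ((5-4*b)*y)^2"
    unfolding cmod_power2 N2_def x_def y_def by (simp add: power2_eq_square algebra_simps)
  have lt: "cmod N2 ^2 < (2 * cmod N1)^2" using D n1 n2 by (simp add: power_mult_distrib)
  hence lt2: "cmod N2 < 2 * cmod N1" by (rule power_less_imp_less_base) simp
  hence "N1 \<noteq> 0" by auto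
  then show "1 - z \<noteq> 0" unfolding N1_def .
  have "(1 - of_real (2*b-1) * z)/(1 - z) - 3/2 = N2 / (2*N1)"
    using \<open>N1 \<noteq> 0\<close> unfolding N1_def N2_def by (simp add: field_simps)
  also have "cmod \<dots> < 1" using lt2 \<open>N1 \<noteq> 0\<close> by (simp add: norm_divide divide_less_eq)
  finally show "cmod ((1 - of_real (2*b-1) * z)/(1 - z) - 3/2) < 1" .
qed
lemma cardioid:
  fixes P :: complex
  assumes "cmod (P - 3/2) < 1"
  shows "cmod (csqrt (2*P-1) - 1) < 1" "1 + (csqrt (2*P-1) - 1) + (csqrt (2*P-1) - 1)^2/2 = P"
        "2*P-1 \<notin> \<real>\<^sub>\<le>\<^sub>0"
proof -
  define u where "u = 2*P - 1"
  have "\<bar>Re (P - 3/2)\<bar> < 1" using abs_Re_le_cmod[of "P - 3/2"] assms by linarith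
  hence reu: "Re u > 0" unfolding u_def by simp
  then show "2*P-1 \<notin> \<real>\<^sub>\<le>\<^sub>0" unfolding u_def[symmetric] by (auto simp: complex_nonpos_Reals_iff)
  define s where "s = csqrt u"
  have su: "s^2 = u" unfolding s_def by simp
  have a0: "Re s \<ge> 0" unfolding s_def using csqrt_principal[of u] by auto
  have "u - 2 = 2*(P - 3/2)" unfolding u_def by simp
  hence "cmod (u - 2) = cmod (2::complex) * cmod (P - 3/2)" by (metis norm_mult)
  hence "cmod (u - 2) = 2 * cmod (P - 3/2)" by simp
  hence "cmod (u - 2) < 2" using assms by simp
  hence "cmod (u - 2)^2 < 2^2" by (intro power_strict_mono) auto
  hence ineq: "(Re s^2 - Im s^2 - 2)^2 + (2*Re s*Im s)^2 < 4"
    unfolding su[symmetric] cmod_power2 by (simp add: power2_eq_square algebra_simps)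
  define a where "a = Re s"
  define b where "b = Im s"
  have ab: "(a^2+b^2)^2 < 4*a^2"
  proof -
    have "(a^2+b^2)^2 < 4*(a^2-b^2)" using ineq unfolding a_def[symmetric] b_def[symmetric]
      by (simp add: power2_eq_square algebra_simps)
    moreover have "4*(a^2-b^2) \<le> 4*a^2" by simp
    ultimately show ?thesis by linarith
  qed
  have "a^2 + b^2 < 2*a"
  proof (rule ccontr)
    assume "\<not> a^2 + b^2 < 2*a"
    hence "2*a \<le> a^2 + b^2" by simp
    hence "(2*a)^2 \<le> (a^2+b^2)^2" using a0 a_def by (intro power_mono) auto
    thus False using ab by (simp add: power_mult_distrib)
  qed
  hence "cmod (s - 1)^2 < 1" unfolding cmod_power2 a_def b_def by (simp add: power2_eq_square algebra_simps)
  thus "cmod (csqrt (2*P-1) - 1) < 1" unfolding s_def u_def by (simp add: power_less_one_iff)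
  have "1 + (s - 1) + (s - 1)^2/2 = (1 + s^2)/2" by (simp add: power2_eq_square field_simps)
  also have "\<dots> = P" unfolding su u_def by simp
  finally show "1 + (csqrt (2*P-1) - 1) + (csqrt (2*P-1) - 1)^2/2 = P" unfolding s_def u_def .
qed
lemma rz_in:
  fixes r :: real
  assumes "0<r" "r\<le>1" "z \<in> ball (0::complex) 1"
  shows "of_real r * z \<in> ball 0 1"
proof -
  have "r * cmod z \<le> 1 * cmod z" using assms by (intro mult_right_mono) auto
  thus ?thesis using assms by (simp add: norm_mult)
qed

lemma dil:
  fixes r :: real
  assumes hf: "f holomorphic_on ball 0 1" and r: "0<r" "r\<le>1" and z: "z \<in> ball 0 1"
  shows "deriv (\<lambda>z. f (of_real r * z) / of_real r) z = deriv f (of_real r * z)"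
    and "zf_over_f (\<lambda>z. f (of_real r * z) / of_real r) z = zf_over_f f (of_real r * z)"
proof -
  have rz: "of_real r * z \<in> ball 0 1" using rz_in r z .
  have d1: "(f has_field_derivative deriv f (of_real r * z)) (at (of_real r * z))"
    using holomorphic_derivI[OF hf open_ball rz] by simp
  have d2: "((\<lambda>z. of_real r * z) has_field_derivative of_real r) (at z)"
    by (auto intro!: derivative_eq_intros)
  have "((\<lambda>z. f (of_real r * z)) has_field_derivative deriv f (of_real r * z) * of_real r) (at z)"
    using DERIV_chain2[OF d1 d2] .
  hence "((\<lambda>z. f (of_real r * z) / of_real r) has_field_derivative deriv f (of_real r * z) * of_real r / of_real r) (at z)"
    by (rule DERIV_cdivide)
  hence "((\<lambda>z. f (of_real r * z) / of_real r) has_field_derivative deriv f (of_real r * z)) (at z)"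
    using r by simp
  thus dd: "deriv (\<lambda>z. f (of_real r * z) / of_real r) z = deriv f (of_real r * z)"
    by (rule DERIV_imp_deriv)
  show "zf_over_f (\<lambda>z. f (of_real r * z) / of_real r) z = zf_over_f f (of_real r * z)"
    unfolding zf_over_f_def dd using r by (cases "f (of_real r * z) = 0") (auto simp: field_simps)
qed

lemma to_Scar:
  fixes r :: real
  assumes fA: "f \<in> class_A" and hp: "zf_over_f f holomorphic_on unit_disc" and r: "0<r" "r\<le>1"
    and bd: "\<forall>z\<in>unit_disc. cmod (zf_over_f f (of_real r * z) - 3/2) < 1"
  shows "(\<lambda>z. f (of_real r * z)/of_real r) \<in> S_car"
proof -
  have hf: "f holomorphic_on ball 0 1" and f0: "f 0 = 0" and d0: "deriv f 0 = 1"
    using fA by (auto simp: class_A_def unit_disc_def)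
  have img: "(\<lambda>z::complex. of_real r * z) ` ball 0 1 \<subseteq> ball 0 1" by (intro image_subsetI rz_in[OF r])
  have h1: "(\<lambda>z. f (of_real r * z)) holomorphic_on ball 0 1"
    using holomorphic_on_compose_gen[OF _ hf img] by (auto simp: o_def intro!: holomorphic_intros)
  have h2: "(\<lambda>z. f (of_real r * z)/of_real r) holomorphic_on ball 0 1"
    using h1 by (intro holomorphic_intros) auto
  have hp': "zf_over_f f holomorphic_on ball 0 1" using hp unfolding unit_disc_def .
  have h3: "(\<lambda>z. zf_over_f f (of_real r * z)) holomorphic_on ball 0 1"
    using holomorphic_on_compose_gen[OF _ hp' img] by (auto simp: o_def intro!: holomorphic_intros)
  have h4: "zf_over_f (\<lambda>z. f (of_real r * z)/of_real r) holomorphic_on ball 0 1"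
    using h3 by (rule holomorphic_transform) (use dil(2)[OF hf r] in auto)
  define w where "w = (\<lambda>z. csqrt (2 * zf_over_f f (of_real r * z) - 1) - 1)"
  have bd': "\<And>z. z \<in> ball 0 1 \<Longrightarrow> cmod (zf_over_f f (of_real r * z) - 3/2) < 1"
    using bd unfolding unit_disc_def by auto
  have hw: "w holomorphic_on ball 0 1" unfolding w_def
    by (intro holomorphic_intros h3) (use cardioid(3)[OF bd'] in auto)
  have wD: "w ` ball 0 1 \<subseteq> ball 0 1" unfolding w_def using cardioid(1)[OF bd'] by auto
  have w0: "w 0 = 0" unfolding w_def by (simp add: zf_over_f_def)
  have weq: "\<forall>z\<in>ball 0 1. zf_over_f (\<lambda>z. f (of_real r * z)/of_real r) z = 1 + w z + (w z)^2/2"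
    unfolding w_def using cardioid(2)[OF bd'] dil(2)[OF hf r] by auto
  have dd0: "deriv (\<lambda>z. f (of_real r * z) / of_real r) 0 = 1"
    using dil(1)[OF hf r, of 0] d0 by simp
  have sub: "subordinate (zf_over_f (\<lambda>z. f (of_real r * z)/of_real r)) (\<lambda>z. 1 + z + z\<^sup>2 / 2)"
    unfolding subordinate_def unit_disc_def using hw wD w0 weq by blast
  have cA: "(\<lambda>z. f (of_real r * z)/of_real r) \<in> class_A"
    unfolding class_A_def unit_disc_def using h2 dd0 f0 by simp
  show ?thesis unfolding S_car_def using cA sub h4 unit_disc_def by simp
qed
lemma schwarz_bd:
  fixes r R :: real
  assumes hw: "w holomorphic_on ball 0 1" and wD: "w ` ball 0 1 \<subseteq> ball 0 1" and w0: "w 0 = 0"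
    and r: "0<r" "r \<le> R" "r \<le> 1" and z: "z \<in> ball 0 1"
  shows "cmod (w (of_real r * z)) < R"
proof -
  have no: "\<And>z. norm z < 1 \<Longrightarrow> norm (w z) < 1" using wD by (metis image_subset_iff mem_ball_0)
  have "cmod z < 1" using z by simp
  hence lt: "r * cmod z < r" using r by simp
  have n1: "norm (of_real r * z) < 1" using rz_in[of r z] r z by simp
  have "cmod (w (of_real r * z)) \<le> cmod (of_real r * z)"
    by (rule Schwarz_Lemma(1)[OF hw w0 no n1])
  also have "\<dots> = r * cmod z" using r by (simp add: norm_mult)
  finally show ?thesis using lt r by linarith
qed

lemma not_Scar:
  fixes c :: real
  assumes z: "z \<in> unit_disc" and e: "zf_over_f g z = of_real c" and c: "c < 1/2"
  shows "g \<notin> S_car"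
proof
  assume "g \<in> S_car"
  then obtain w where wD: "w ` unit_disc \<subseteq> unit_disc" and weq: "\<forall>z\<in>unit_disc. zf_over_f g z = 1 + w z + (w z)\<^sup>2/2"
    unfolding S_car_def subordinate_def by blast
  define v where "v = w z"
  have vn: "cmod v < 1" using wD z unfolding v_def unit_disc_def by (metis image_subset_iff mem_ball_0)
  have ev: "of_real c = 1 + v + v^2/2" using weq z e unfolding v_def by auto
  define a where "a = Re v"
  define b where "b = Im v"
  have im: "b + a*b = 0" using arg_cong[OF ev, of Im] unfolding a_def b_def by (simp add: power2_eq_square algebra_simps)
  have re: "c = 1 + a + (a^2 - b^2)/2" using arg_cong[OF ev, of Re] unfolding a_def b_def by (simp add: power2_eq_square)
  have "(1+a)^2 - b^2 = 2*c - 1" unfolding re by (simp add: power2_eq_square field_simps)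
  hence "(1+a)^2 < b^2" using c by linarith
  hence "b \<noteq> 0" by auto
  hence "a = -1" using im by (metis add.commute add_eq_0_iff2 mult_cancel_right1 mult.commute distrib_left mult_eq_0_iff)
  hence "1 \<le> cmod v" using abs_Re_le_cmod[of v] unfolding a_def by simp
  thus False using vn by simp
qed

lemma primitive:
  assumes hh: "h holomorphic_on ball 0 1"
  obtains f where "f \<in> class_A" "\<forall>z\<in>ball 0 1. z \<noteq> 0 \<longrightarrow> f z \<noteq> 0"
    "\<forall>z\<in>ball 0 1. zf_over_f f z = 1 + z * h z"
proof -
  obtain G where G: "\<And>x. x \<in> ball 0 1 \<Longrightarrow> (G has_field_derivative h x) (at x within ball 0 1)"
    using holomorphic_convex_primitive'[OF convex_ball open_ball hh] by blast
  have G': "(G has_field_derivative h x) (at x)" if "x \<in> ball 0 1" for x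
    using G[OF that] at_within_open[OF that open_ball] by simp
  define f where "f = (\<lambda>z. z * exp (G z - G 0))"
  have fd: "(f has_field_derivative (exp (G z - G 0) + z * (exp (G z - G 0) * h z))) (at z)"
    if "z \<in> ball 0 1" for z
    unfolding f_def using G'[OF that] by (auto intro!: derivative_eq_intros)
  have hf: "f holomorphic_on ball 0 1"
    unfolding holomorphic_on_open[OF open_ball] using fd by blast
  have df: "deriv f z = exp (G z - G 0) + z * (exp (G z - G 0) * h z)" if "z \<in> ball 0 1" for z
    using DERIV_imp_deriv[OF fd[OF that]] .
  have "f \<in> class_A" unfolding class_A_def unit_disc_def using hf df[of 0] by (simp add: f_def)
  moreover have "\<forall>z\<in>ball 0 1. z \<noteq> 0 \<longrightarrow> f z \<noteq> 0" by (simp add: f_def)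
  moreover have "\<forall>z\<in>ball 0 1. zf_over_f f z = 1 + z * h z"
  proof
    fix z :: complex assume z: "z \<in> ball 0 1"
    show "zf_over_f f z = 1 + z * h z"
      unfolding zf_over_f_def df[OF z] by (simp add: f_def field_simps)
  qed
  ultimately show ?thesis using that by blast
qed

lemma M_hol:
  assumes fA: "f \<in> class_A" and nz: "\<forall>z\<in>unit_disc. z \<noteq> 0 \<longrightarrow> f z \<noteq> 0"
  shows "zf_over_f f holomorphic_on unit_disc"
proof -
  have hf: "f holomorphic_on ball 0 1" and f0: "f 0 = 0" and d0: "deriv f 0 = 1"
    using fA by (auto simp: class_A_def unit_disc_def)
  define g where "g = (\<lambda>z. if z = 0 then deriv f 0 else (f z - f 0) / (z - 0))"
  have hg: "g holomorphic_on ball 0 1" unfolding g_def by (rule pole_lemma[OF hf]) simp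
  have hd: "deriv f holomorphic_on ball 0 1" by (rule holomorphic_deriv[OF hf open_ball])
  have gnz: "g z \<noteq> 0" if "z \<in> ball 0 1" for z
    using nz that d0 f0 unfolding g_def unit_disc_def by auto
  have "(\<lambda>z. deriv f z / g z) holomorphic_on ball 0 1"
    using holomorphic_on_divide[OF hd hg] gnz by blast
  moreover have "deriv f z / g z = zf_over_f f z" if "z \<in> ball 0 1" for z
    unfolding g_def zf_over_f_def using d0 f0 by auto
  ultimately show ?thesis unfolding unit_disc_def by (rule holomorphic_transform) 
qed

lemma partBL:
  fixes a :: real assumes a: "0 \<le> a" "a < 1"
  shows "Scar_radius (BL a) = 1 / (1 + sqrt (1 + a))"
proof -
  define R where "R = 1/(1+sqrt(1+a))"
  note RR = R_BL[OF a, folded R_def]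
  define \<psi> where "\<psi> = (\<lambda>z::complex. 1 + z / (1 - complex_of_real a * z\<^sup>2))"
  have S: "{r. 0 < r \<and> r \<le> 1 \<and> (\<forall>f\<in>BL a. (\<lambda>z. f (complex_of_real r * z) / complex_of_real r) \<in> S_car)} = {0<..R}"
  proof (intro equalityI subsetI)
    fix r assume "r \<in> {0<..R}"
    hence r: "0 < r" "r \<le> R" by auto
    have r1: "r \<le> 1" using r RR by linarith
    have "(\<lambda>z. f (complex_of_real r * z) / complex_of_real r) \<in> S_car" if fB: "f \<in> BL a" for f
    proof -
      have fA: "f \<in> class_A" and hp: "zf_over_f f holomorphic_on unit_disc"
        and sb: "subordinate (zf_over_f f) \<psi>" using fB unfolding BL_def \<psi>_def by auto
      obtain w where hw: "w holomorphic_on ball 0 1" and wD: "w ` ball 0 1 \<subseteq> ball 0 1" and w0: "w 0 = 0"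
        and weq: "\<forall>z\<in>ball 0 1. zf_over_f f z = \<psi> (w z)"
        using sb unfolding subordinate_def unit_disc_def by blast
      show ?thesis
      proof (rule to_Scar[OF fA hp r(1) r1])
        show "\<forall>z\<in>unit_disc. cmod (zf_over_f f (of_real r * z) - 3/2) < 1"
        proof
          fix z assume z: "z \<in> unit_disc"
          hence zb: "z \<in> ball 0 1" unfolding unit_disc_def .
          have "cmod (w (of_real r * z)) < R" by (rule schwarz_bd[OF hw wD w0 r r1 zb])
          hence "cmod (\<psi> (w (of_real r * z)) - 3/2) < 1"
            unfolding \<psi>_def using BL_disc(2)[OF a] R_def by simp
          thus "cmod (zf_over_f f (of_real r * z) - 3/2) < 1"
            using weq rz_in[OF r(1) r1 zb] by simp
        qed
      qed
    qed
    thus "r \<in> {r. 0 < r \<and> r \<le> 1 \<and> (\<forall>f\<in>BL a. (\<lambda>z. f (complex_of_real r * z) / complex_of_real r) \<in> S_car)}"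
      using r r1 by auto
  next
    fix r assume "r \<in> {r. 0 < r \<and> r \<le> 1 \<and> (\<forall>f\<in>BL a. (\<lambda>z. f (complex_of_real r * z) / complex_of_real r) \<in> S_car)}"
    hence r: "0 < r" "r \<le> 1" and all: "\<forall>f\<in>BL a. (\<lambda>z. f (complex_of_real r * z) / complex_of_real r) \<in> S_car"
      by auto
    show "r \<in> {0<..R}"
    proof (rule ccontr)
      assume "r \<notin> {0<..R}"
      hence rR: "R < r" using r by auto
      have den: "1 - complex_of_real a * z\<^sup>2 \<noteq> 0" if "z \<in> ball 0 1" for z
      proof -
        have "cmod z ^2 \<le> 1" using that by (simp add: power_le_one)
        hence "a * cmod z ^2 \<le> a * 1" using a by (intro mult_left_mono) auto
        hence "cmod (complex_of_real a * z\<^sup>2) < 1" using a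
          by (simp add: norm_mult norm_power)
        thus ?thesis by auto
      qed
      define h where "h = (\<lambda>z::complex. 1 / (1 - complex_of_real a * z\<^sup>2))"
      have hh: "h holomorphic_on ball 0 1" unfolding h_def using den by (intro holomorphic_intros) auto
      obtain f where fA: "f \<in> class_A" and fe: "\<forall>z\<in>ball 0 1. zf_over_f f z = 1 + z * h z"
        using primitive[OF hh] by blast
      have fe': "\<forall>z\<in>ball 0 1. zf_over_f f z = \<psi> z" using fe unfolding h_def \<psi>_def by simp
      have hpsi: "\<psi> holomorphic_on ball 0 1" unfolding \<psi>_def using den by (intro holomorphic_intros) auto
      have hp: "zf_over_f f holomorphic_on unit_disc" unfolding unit_disc_def
        using hpsi by (rule holomorphic_transform) (use fe' in auto)
      have "subordinate (zf_over_f f) \<psi>" unfolding subordinate_def unit_disc_def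
        using fe' by (intro exI[of _ "\<lambda>z. z"]) auto
      hence fB: "f \<in> BL a" unfolding BL_def \<psi>_def using fA hp by auto
      have inS: "(\<lambda>z. f (complex_of_real r * z) / complex_of_real r) \<in> S_car" using all fB by auto
      define t where "t = (R + r)/2"
      have t: "R < t" "t < r" "t < 1" using rR r unfolding t_def by auto
      have t0: "0 < t" using t RR by linarith
      define z0 where "z0 = complex_of_real (-t/r)"
      have "t/r < 1" using t r by simp
      hence "\<bar>-t/r\<bar> < 1" using t0 r by simp
      hence z0: "z0 \<in> ball 0 1" unfolding z0_def mem_ball_0 norm_of_real .
      have rz0: "complex_of_real r * z0 = complex_of_real (-t)" unfolding z0_def using r by simp
      have fA_h: "f holomorphic_on ball 0 1" using fA unfolding class_A_def unit_disc_def by auto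
      have "cmod (complex_of_real (-t)) < 1" using t t0 by simp
      have at1: "a*t^2 < 1"
      proof -
        have "t^2 < 1" using t t0 by (simp add: power_less_one_iff abs_if)
        moreover have "a*t^2 \<le> 1*t^2" using a by (intro mult_right_mono) auto
        ultimately show ?thesis by linarith
      qed
      have val: "zf_over_f (\<lambda>z. f (complex_of_real r * z) / complex_of_real r) z0
           = complex_of_real (1 - t/(1 - a*t^2))"
        using dil(2)[OF fA_h r z0] rz0 fe'[rule_format, of "complex_of_real (-t)"] \<open>cmod (complex_of_real (-t)) < 1\<close>
        unfolding \<psi>_def by simp
      have "a*R^2 \<le> a*t^2" using a t RR by (intro mult_left_mono power_mono) auto
      hence "a*t^2 + 2*t - 1 > 0" using RR t by linarith
      hence "t/(1 - a*t^2) > 1/2" using at1 by (simp add: field_simps)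
      hence "1 - t/(1 - a*t^2) < 1/2" by simp
      from not_Scar[OF _ val this] z0 inS show False unfolding unit_disc_def by blast
    qed
  qed
  show ?thesis unfolding Scar_radius_def S R_def[symmetric] using RR by simp
qed

lemma Re_inv_1m:
  fixes z :: complex assumes "cmod z < 1"
  shows "Re (1/(1-z)) > 1/2"
proof -
  define x where "x = Re z"
  define y where "y = Im z"
  have "cmod z ^ 2 < 1" using power_strict_mono[of "cmod z" 1 2] assms by simp
  hence xy: "x^2 + y^2 < 1" using cmod_power2[of z] unfolding x_def y_def by simp
  have x1: "x < 1" using abs_Re_le_cmod[of z] assms unfolding x_def by linarith
  have d: "(1-x)^2 + y^2 > 0" using x1 by (simp add: add_pos_nonneg)
  have "Re (1/(1-z)) = (1-x)/((1-x)^2+y^2)" unfolding x_def y_def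
    by (simp add: Re_divide cmod_power2 power2_eq_square)
  moreover have "(1-x)/((1-x)^2+y^2) > 1/2" using d xy
    by (simp add: field_simps power2_eq_square)
  ultimately show ?thesis by simp
qed

lemma partM:
  fixes b :: real assumes b: "b > 1"
  shows "Scar_radius (M_class b) = 1 / (4 * b - 3)"
proof -
  define R where "R = 1/(4*b-3)"
  have R0: "0 < R" "R < 1" using b unfolding R_def by (auto simp: field_simps)
  have S: "{r. 0 < r \<and> r \<le> 1 \<and> (\<forall>f\<in>M_class b. (\<lambda>z. f (complex_of_real r * z) / complex_of_real r) \<in> S_car)} = {0<..R}"
  proof (intro equalityI subsetI)
    fix r assume "r \<in> {0<..R}"
    hence r: "0 < r" "r \<le> R" by auto
    have r1: "r \<le> 1" using r R0 by linarith
    have "(\<lambda>z. f (complex_of_real r * z) / complex_of_real r) \<in> S_car" if fM: "f \<in> M_class b" for f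
    proof -
      have fA: "f \<in> class_A" and nz: "\<forall>z\<in>unit_disc. z \<noteq> 0 \<longrightarrow> f z \<noteq> 0"
        and re: "\<forall>z\<in>unit_disc. Re (zf_over_f f z) < b" using fM unfolding M_class_def by auto
      have hp: "zf_over_f f holomorphic_on unit_disc" by (rule M_hol[OF fA nz])
      define p where "p = zf_over_f f"
      define c where "c = complex_of_real (2*b-1)"
      have pc: "p z - c \<noteq> 0" if "z \<in> ball 0 1" for z
      proof -
        have "Re (p z) < b" using re that unfolding p_def unit_disc_def by auto
        hence "Re (p z - c) < 0" unfolding c_def using b by simp
        thus ?thesis by auto
      qed
      define w where "w = (\<lambda>z. (p z - 1)/(p z - c))"
      have hw: "w holomorphic_on ball 0 1" unfolding w_def
        using hp pc unfolding p_def unit_disc_def by (intro holomorphic_intros) auto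
      have wlt: "cmod (w z) < 1" if "z \<in> ball 0 1" for z
      proof -
        have rp: "Re (p z) < b" using re that unfolding p_def unit_disc_def by auto
        have "(Re (p z) - 1)^2 < (Re (p z) - (2*b-1))^2"
        proof -
          have "(Re (p z) - (2*b-1))^2 - (Re (p z) - 1)^2 = 4*(b - Re (p z))*(b-1)"
            by (simp add: power2_eq_square algebra_simps)
          moreover have "4*(b - Re (p z))*(b-1) > 0" using rp b by simp
          ultimately show ?thesis by linarith
        qed
        hence "cmod (p z - 1)^2 < cmod (p z - c)^2" unfolding cmod_power2 c_def by simp
        hence "cmod (p z - 1) < cmod (p z - c)" by (rule power_less_imp_less_base) simp
        thus ?thesis unfolding w_def using pc[OF that] by (simp add: norm_divide divide_less_eq)
      qed
      have wD: "w ` ball 0 1 \<subseteq> ball 0 1" using wlt by auto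
      have w0: "w 0 = 0" unfolding w_def p_def zf_over_f_def by simp
      have peq: "p z = (1 - c * w z)/(1 - w z)" if "z \<in> ball 0 1" for z
      proof -
        have c1: "c - 1 \<noteq> 0" unfolding c_def using b by (simp add: complex_eq_iff)
        define A where "A = (1 - c)/(p z - c)"
        have A0: "A \<noteq> 0" unfolding A_def using pc[OF that] c1 by simp
        have e1: "1 - w z = A" unfolding w_def A_def using pc[OF that] by (simp add: field_simps)
        have e2: "1 - c * w z = p z * A" unfolding w_def A_def using pc[OF that] by (simp add: field_simps)
        show ?thesis unfolding e1 e2 using A0 by simp
      qed
      show ?thesis
      proof (rule to_Scar[OF fA hp r(1) r1])
        show "\<forall>z\<in>unit_disc. cmod (zf_over_f f (of_real r * z) - 3/2) < 1"
        proof
          fix z assume z: "z \<in> unit_disc"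
          hence zb: "z \<in> ball 0 1" unfolding unit_disc_def .
          have "cmod (w (of_real r * z)) < R" by (rule schwarz_bd[OF hw wD w0 r r1 zb])
          hence "cmod ((1 - c * w (of_real r * z))/(1 - w (of_real r * z)) - 3/2) < 1"
            unfolding c_def using M_disc(2)[OF b] R_def by simp
          thus "cmod (zf_over_f f (of_real r * z) - 3/2) < 1"
            using peq[OF rz_in[OF r(1) r1 zb]] unfolding p_def by simp
        qed
      qed
    qed
    thus "r \<in> {r. 0 < r \<and> r \<le> 1 \<and> (\<forall>f\<in>M_class b. (\<lambda>z. f (complex_of_real r * z) / complex_of_real r) \<in> S_car)}"
      using r r1 by auto
  next
    fix r assume "r \<in> {r. 0 < r \<and> r \<le> 1 \<and> (\<forall>f\<in>M_class b. (\<lambda>z. f (complex_of_real r * z) / complex_of_real r) \<in> S_car)}"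
    hence r: "0 < r" "r \<le> 1" and all: "\<forall>f\<in>M_class b. (\<lambda>z. f (complex_of_real r * z) / complex_of_real r) \<in> S_car"
      by auto
    show "r \<in> {0<..R}"
    proof (rule ccontr)
      assume "r \<notin> {0<..R}"
      hence rR: "R < r" using r by auto
      have den: "1 - z \<noteq> 0" if "z \<in> ball 0 1" for z :: complex
      proof
        assume "1 - z = 0" hence "z = 1" by simp
        thus False using that by simp
      qed
      define h where "h = (\<lambda>z::complex. complex_of_real (2-2*b) / (1 - z))"
      have hh: "h holomorphic_on ball 0 1" unfolding h_def using den by (intro holomorphic_intros) auto
      obtain f where fA: "f \<in> class_A" and nz: "\<forall>z\<in>ball 0 1. z \<noteq> 0 \<longrightarrow> f z \<noteq> 0"
        and fe: "\<forall>z\<in>ball 0 1. zf_over_f f z = 1 + z * h z"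
        using primitive[OF hh] by blast
      have reb: "Re (zf_over_f f z) < b" if "z \<in> ball 0 1" for z
      proof -
        have n: "cmod z < 1" using that by simp
        have "1 + z * h z = 1 + complex_of_real (2-2*b) * (1/(1-z) - 1)"
          unfolding h_def using den[OF that] by (simp add: field_simps)
        hence "Re (1 + z * h z) = 1 + (2-2*b) * (Re (1/(1-z)) - 1)" by simp
        moreover have "(2-2*b) * (Re (1/(1-z)) - 1) < (2-2*b) * (1/2 - 1)"
          using Re_inv_1m[OF n] b by (intro mult_strict_left_mono_neg) auto
        moreover have "(2-2*b)*(1/2-1) = b - 1" by (simp add: algebra_simps)
        moreover have "zf_over_f f z = 1 + z * h z" using fe that by simp
        ultimately show ?thesis by simp
      qed
      have fM: "f \<in> M_class b" unfolding M_class_def unit_disc_def using fA nz reb by auto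
      have inS: "(\<lambda>z. f (complex_of_real r * z) / complex_of_real r) \<in> S_car" using all fM by auto
      define t where "t = (R + r)/2"
      have t: "R < t" "t < r" "t < 1" using rR r unfolding t_def by auto
      have t0: "0 < t" using t R0 by linarith
      define z0 where "z0 = complex_of_real (t/r)"
      have "t/r < 1" using t r by simp
      hence "\<bar>t/r\<bar> < 1" using t0 r by simp
      hence z0: "z0 \<in> ball 0 1" unfolding z0_def mem_ball_0 norm_of_real .
      have rz0: "complex_of_real r * z0 = complex_of_real t" unfolding z0_def using r by simp
      have fA_h: "f holomorphic_on ball 0 1" using fA unfolding class_A_def unit_disc_def by auto
      have tb: "complex_of_real t \<in> ball 0 1" using t t0 by simp
      have val: "zf_over_f (\<lambda>z. f (complex_of_real r * z) / complex_of_real r) z0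
           = complex_of_real (1 + t * (2-2*b)/(1 - t))"
        using dil(2)[OF fA_h r z0] rz0 fe[rule_format, OF tb] unfolding h_def by simp
      have "(4*b-3)*t > 1" using t R0 b unfolding R_def by (simp add: field_simps)
      hence "t * (2*b-2)/(1 - t) > 1/2" using t by (simp add: field_simps)
      moreover have "t * (2-2*b)/(1 - t) = - (t * (2*b-2)/(1 - t))" using t by (simp add: field_simps)
      ultimately have "1 + t * (2-2*b)/(1 - t) < 1/2" by (metis add_less_cancel_left add_uminus_conv_diff diff_less_eq one_add_one field_sum_of_halves)
      from not_Scar[OF _ val this] z0 inS show False unfolding unit_disc_def by blast
    qed
  qed
  show ?thesis unfolding Scar_radius_def S R_def[symmetric] using R0 by simp
qed


theorem theorem4p4:
  shows "(\<forall>\<alpha>::real. 0 \<le> \<alpha> \<and> \<alpha> < 1 \<longrightarrow> Scar_radius (BL \<alpha>) = 1 / (1 + sqrt (1 + \<alpha>)))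
       \<and> (\<forall>\<beta>::real. \<beta> > 1 \<longrightarrow> Scar_radius (M_class \<beta>) = 1 / (4 * \<beta> - 3))"
  using partBL partM by blast

end
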